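(* Let $\Gamma$ be co-compact (no parabolic elements) and let $\chi_k,\chi_{-k}:\Gamma\to\mathcal U(V)$ be $m$-dimensional unitary multiplier systems of admissible weights $2k$ and $-2k$ respectively, with $\chi_{-k}=\overline{\chi_k}$. Then the associated Ruelle zeta functions satisfy $$R(s;\chi_{-k})R(-s;\chi_{-k})=R(s;\chi_k)R(-s;\chi_k).$$
   Context: $\Gamma\subset\mathrm{SL}(2,\mathbb R)$ is a co-compact Fuchsian group with $-I_2\in\Gamma$. An $m$-dimensional unitary multiplier system of real weight $2k$ is a map $\chi:\Gamma\to\mathcal U(V)$, $\dim V=m$, with $\chi(-I_2)=e^{-2\pi ik}I_V$ and $\chi(\gamma\eta)=\sigma_{2k}(\gamma,\eta)\chi(\gamma)\chi(\eta)$, $\sigma_{2k}$ the standard weight-$2k$ factor system. For ${\rm Re}(s)>1$, $R(s;\chi)=\prod_{P_0}\det(I_m-\chi(P_0)N(P_0)^{-s})$, the product over primitive hyperbolic conjugacy classes $P_0$ of $\Gamma$ with norm $N(P_0)$, meromorphically continued to $\mathbb C$. *)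

theory Defs
  imports "HOL-Complex_Analysis.Complex_Analysis"
begin

type_synonym mat2 = "real^2^2"

definition SL2R :: "mat2 set" where
  "SL2R = {A. det A = 1}"

definition uhp :: "complex set" where
  "uhp = {z. Im z > 0}"

definition mobius :: "mat2 \<Rightarrow> complex \<Rightarrow> complex" where
  "mobius A z = (of_real (A$1$1) * z + of_real (A$1$2)) / (of_real (A$2$1) * z + of_real (A$2$2))"

definition fuchsian_group :: "mat2 set \<Rightarrow> bool" where
  "fuchsian_group G \<longleftrightarrow> G \<subseteq> SL2R \<and> mat 1 \<in> G \<and>
     (\<forall>A\<in>G. \<forall>B\<in>G. A ** B \<in> G) \<and> (\<forall>A\<in>G. matrix_inv A \<in> G) \<and> discrete G"

text \<open>Co-compact: the quotient of the upper half plane by G is compact, i.e. there is a compact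
  subset of the upper half plane meeting every G-orbit.\<close>
definition cocompact :: "mat2 set \<Rightarrow> bool" where
  "cocompact G \<longleftrightarrow> (\<exists>K. compact K \<and> K \<subseteq> uhp \<and> (\<forall>z\<in>uhp. \<exists>g\<in>G. mobius g z \<in> K))"

text \<open>Argument convention -pi <= arg w < pi, and w^r = |w|^r exp(i r arg w).\<close>
definition arg_conv :: "complex \<Rightarrow> real" where
  "arg_conv w = (if Arg w = pi then - pi else Arg w)"

definition cpow_conv :: "complex \<Rightarrow> real \<Rightarrow> complex" where
  "cpow_conv w r = of_real (cmod w powr r) * cis (r * arg_conv w)"

definition jfac :: "mat2 \<Rightarrow> complex \<Rightarrow> complex" where
  "jfac A z = of_real (A$2$1) * z + of_real (A$2$2)"

text \<open>Standard factor system of weight r (independent of z in the upper half plane; evaluated at i).\<close>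
definition sigma :: "real \<Rightarrow> mat2 \<Rightarrow> mat2 \<Rightarrow> complex" where
  "sigma r A B = cpow_conv (jfac A (mobius B \<i>)) r * cpow_conv (jfac B \<i>) r / cpow_conv (jfac (A ** B) \<i>) r"

definition adjoint_mat :: "complex^'m^'m \<Rightarrow> complex^'m^'m" where
  "adjoint_mat U = (\<chi> i j. cnj (U$j$i))"

definition unitary_mat :: "complex^'m^'m \<Rightarrow> bool" where
  "unitary_mat U \<longleftrightarrow> U ** adjoint_mat U = mat 1 \<and> adjoint_mat U ** U = mat 1"

definition conj_mat :: "complex^'m^'m \<Rightarrow> complex^'m^'m" where
  "conj_mat U = (\<chi> i j. cnj (U$i$j))"

definition cscale_mat :: "complex \<Rightarrow> complex^'m^'m \<Rightarrow> complex^'m^'m" where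
  "cscale_mat c U = (\<chi> i j. c * U$i$j)"

definition multiplier_system :: "mat2 set \<Rightarrow> real \<Rightarrow> (mat2 \<Rightarrow> complex^'m^'m) \<Rightarrow> bool" where
  "multiplier_system G r X \<longleftrightarrow>
     (\<forall>g\<in>G. unitary_mat (X g)) \<and>
     X (- mat 1) = cscale_mat (cis (- pi * r)) (mat 1) \<and>
     (\<forall>g\<in>G. \<forall>h\<in>G. X (g ** h) = cscale_mat (sigma r g h) (X g ** X h))"

primrec mpow :: "mat2 \<Rightarrow> nat \<Rightarrow> mat2" where
  "mpow A 0 = mat 1"
| "mpow A (Suc n) = A ** mpow A n"

definition trace2 :: "mat2 \<Rightarrow> real" where
  "trace2 A = A$1$1 + A$2$2"

text \<open>Primitive hyperbolic element, normalised to positive trace: not (plus/minus) a proper power.\<close>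
definition prim_hyp :: "mat2 set \<Rightarrow> mat2 \<Rightarrow> bool" where
  "prim_hyp G P \<longleftrightarrow> P \<in> G \<and> trace2 P > 2 \<and>
     \<not> (\<exists>Q\<in>G. \<exists>n::nat. n \<ge> 2 \<and> (P = mpow Q n \<or> P = - mpow Q n))"

definition conj_class :: "mat2 set \<Rightarrow> mat2 \<Rightarrow> mat2 set" where
  "conj_class G P = {g ** P ** matrix_inv g | g. g \<in> G}"

definition prim_hyp_classes :: "mat2 set \<Rightarrow> mat2 set set" where
  "prim_hyp_classes G = {conj_class G P | P. prim_hyp G P}"

text \<open>Norm N(P) = (larger eigenvalue)^2 for hyperbolic P with trace > 2.\<close>
definition hnorm :: "mat2 \<Rightarrow> real" where
  "hnorm P = ((trace2 P + sqrt (trace2 P ^ 2 - 4)) / 2) ^ 2"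

definition ruelle_factor :: "(mat2 \<Rightarrow> complex^'m^'m) \<Rightarrow> complex \<Rightarrow> mat2 set \<Rightarrow> complex" where
  "ruelle_factor X s C = (let P = (SOME P. P \<in> C) in
      det (mat 1 - cscale_mat ((of_real (hnorm P)) powr (- s)) (X P)))"

text \<open>R is the meromorphic continuation of the Ruelle zeta function: meromorphic on C and equal,
  for Re s > 1, to the (unconditionally convergent) product over primitive hyperbolic classes.\<close>
definition ruelle_zeta :: "mat2 set \<Rightarrow> (mat2 \<Rightarrow> complex^'m^'m) \<Rightarrow> (complex \<Rightarrow> complex) \<Rightarrow> bool" where
  "ruelle_zeta G X R \<longleftrightarrow> R meromorphic_on UNIV \<and>
     (\<forall>s. Re s > 1 \<longrightarrow>
        ((\<lambda>F. \<Prod>C\<in>F. ruelle_factor X s C) \<longlongrightarrow> R s) (finite_subsets_at_top (prim_hyp_classes G)))"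

end

theory Submission
  imports Defs
begin


lemma mult2_entries:
  fixes A B :: "'a::comm_ring_1^2^2"
  shows "(A ** B)$1$1 = A$1$1*B$1$1 + A$1$2*B$2$1"
    "(A ** B)$1$2 = A$1$1*B$1$2 + A$1$2*B$2$2"
    "(A ** B)$2$1 = A$2$1*B$1$1 + A$2$2*B$2$1"
    "(A ** B)$2$2 = A$2$1*B$1$2 + A$2$2*B$2$2"
  by (simp_all add: matrix_matrix_mult_def sum_2)

lemma mat2_eqI:
  fixes A B :: "'a^2^2"
  assumes "A$1$1 = B$1$1" "A$1$2 = B$1$2" "A$2$1 = B$2$1" "A$2$2 = B$2$2"
  shows "A = B"
  using assms by (simp add: vec_eq_iff forall_2)

definition adj2 :: "mat2 \<Rightarrow> mat2" where
  "adj2 A = (\<chi> i j. if i = 1 then (if j = 1 then A$2$2 else - A$1$2)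
                    else (if j = 1 then - A$2$1 else A$1$1))"

lemma adj2_entries [simp]:
  "adj2 A $1$1 = A$2$2" "adj2 A $1$2 = - A$1$2" "adj2 A $2$1 = - A$2$1" "adj2 A $2$2 = A$1$1"
  by (simp_all add: adj2_def)

lemma mat1_entries [simp]:
  "(mat 1 :: mat2)$1$1 = 1" "(mat 1 :: mat2)$1$2 = 0" "(mat 1 :: mat2)$2$1 = 0" "(mat 1 :: mat2)$2$2 = 1"
  by (simp_all add: mat_def)

lemma adj2_right: "det A = 1 \<Longrightarrow> A ** adj2 A = mat 1"
  by (rule mat2_eqI) (simp_all add: mult2_entries det_2 algebra_simps)

lemma adj2_left: "det A = 1 \<Longrightarrow> adj2 A ** A = mat 1"
  by (rule mat2_eqI) (simp_all add: mult2_entries det_2 algebra_simps)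

lemma matrix_inv_adj2: assumes "det A = 1" shows "matrix_inv A = adj2 A"
proof -
  have "(SOME A'. A ** A' = mat 1 \<and> A' ** A = mat 1) = adj2 A"
  proof (rule some_equality)
    show "A ** adj2 A = mat 1 \<and> adj2 A ** A = mat 1" using adj2_right adj2_left assms by blast
  next
    fix B assume "A ** B = mat 1 \<and> B ** A = mat 1"
    then have "adj2 A ** (A ** B) = adj2 A" by simp
    then show "B = adj2 A" using adj2_left[OF assms] by (simp add: matrix_mul_assoc)
  qed
  then show ?thesis by (simp add: matrix_inv_def)
qed

lemma adj2_mult: "adj2 (A ** B) = adj2 B ** adj2 A"
  by (rule mat2_eqI) (simp_all add: mult2_entries algebra_simps)

lemma adj2_adj2 [simp]: "adj2 (adj2 A) = A"
  by (rule mat2_eqI) simp_all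

lemma adj2_uminus: "adj2 (- A) = - adj2 A"
  by (rule mat2_eqI) simp_all

lemma det_adj2: "det (adj2 A) = det A"
  by (simp add: det_2 algebra_simps)

lemma trace2_adj2: "trace2 (adj2 A) = trace2 A"
  by (simp add: trace2_def)

lemma trace2_conj: fixes g P :: mat2 assumes "det g = 1" shows "trace2 (g ** P ** adj2 g) = trace2 P"
proof -
  have h: "g$1$1 * g$2$2 - g$1$2 * g$2$1 = 1" using assms by (simp add: det_2)
  have "trace2 (g ** P ** adj2 g) = (P$1$1 + P$2$2) * (g$1$1 * g$2$2 - g$1$2 * g$2$1)"
    by (simp add: trace2_def mult2_entries algebra_simps)
  then show ?thesis using h by (simp add: trace2_def)
qed

lemma adj2_mat1 [simp]: "adj2 (mat 1) = mat 1"
  by (rule mat2_eqI) simp_all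

lemma mpow_comm: "mpow A n ** A = A ** mpow A n"
  by (induction n) (simp_all add: matrix_mul_assoc[symmetric])

lemma adj2_mpow: "adj2 (mpow A n) = mpow (adj2 A) n"
  by (induction n) (simp_all add: adj2_mult mpow_comm)



definition theta :: "mat2 \<Rightarrow> complex \<Rightarrow> real" where
  "theta A z = arg_conv (jfac A z)"

lemma arg_conv_bounds: "- pi \<le> arg_conv w" "arg_conv w < pi"
  using mpi_less_Arg[of w] Arg_le_pi[of w] by (auto simp: arg_conv_def)

lemma cis_mpi: "cis (- pi) = -1"
  by (simp add: complex_eq_iff)

lemma cis_arg_conv: "w \<noteq> 0 \<Longrightarrow> cis (arg_conv w) = sgn w"
  by (auto simp: arg_conv_def cis_Arg[symmetric] cis_mpi)

lemma theta_bounds: "- pi \<le> theta A z" "theta A z < pi"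
  by (simp_all add: theta_def arg_conv_bounds)

lemma Im_jfac: fixes A :: mat2 shows "Im (jfac A z) = A$2$1 * Im z"
  by (simp add: jfac_def)

lemma jfac_nonzero:
  fixes A B :: mat2
  assumes "det A = 1" "Im z > 0" shows "jfac A z \<noteq> 0"
proof
  assume h: "jfac A z = 0"
  then have "A$2$1 = 0" using Im_jfac[of A z] assms(2) by simp
  then have "jfac A z = of_real (A$2$2)" by (simp add: jfac_def)
  moreover have "A$2$2 \<noteq> 0" using assms(1) \<open>A$2$1 = 0\<close> by (auto simp: det_2)
  ultimately show False using h by simp
qed

lemma theta_pos: fixes A B :: mat2 assumes "A$2$1 > 0" "Im z > 0" shows "theta A z > 0"
proof -
  have "Im (jfac A z) > 0" using assms by (simp add: Im_jfac)
  then have "0 < Arg (jfac A z) \<and> Arg (jfac A z) < pi" using Arg_lt_pi by blast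
  then show ?thesis by (simp add: theta_def arg_conv_def)
qed

lemma theta_neg: fixes A B :: mat2 assumes "A$2$1 < 0" "Im z > 0" shows "theta A z < 0"
proof -
  have "Im (jfac A z) < 0" using assms by (simp add: Im_jfac mult_neg_pos)
  then have "Arg (jfac A z) < 0" using Arg_neg_iff by blast
  then show ?thesis by (auto simp: theta_def arg_conv_def)
qed

lemma theta_zero: fixes A B :: mat2 assumes "A$2$1 = 0" "A$2$2 > 0" shows "theta A z = 0"
  using assms by (simp add: theta_def arg_conv_def jfac_def)

lemma theta_mpi: fixes A B :: mat2 assumes "A$2$1 = 0" "A$2$2 < 0" shows "theta A z = - pi"
  using assms by (simp add: theta_def arg_conv_def jfac_def)

lemma Im_mobius_pos:
  fixes A B :: mat2
  assumes "det B = 1" "Im z > 0" shows "Im (mobius B z) > 0"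
proof -
  have nz: "jfac B z \<noteq> 0" using jfac_nonzero assms by blast
  have "Im (mobius B z) = Im z / ((Re (jfac B z))\<^sup>2 + (Im (jfac B z))\<^sup>2)"
    using assms(1) unfolding mobius_def jfac_def
    by (simp add: Im_divide det_2 algebra_simps power2_eq_square)
  moreover have "(Re (jfac B z))\<^sup>2 + (Im (jfac B z))\<^sup>2 > 0"
    using nz by (metis complex_neq_0)
  ultimately show ?thesis using assms(2) by simp
qed

lemma jfac_mult:
  fixes A B :: mat2
  assumes "jfac B z \<noteq> 0"
  shows "jfac (A ** B) z = jfac A (mobius B z) * jfac B z"
  using assms unfolding jfac_def mobius_def
  by (simp add: mult2_entries field_simps)

lemma mobius_mult:
  fixes A B :: mat2
  assumes "jfac B z \<noteq> 0" "jfac A (mobius B z) \<noteq> 0"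
  shows "mobius (A ** B) z = mobius A (mobius B z)"
proof -
  define N where "N = of_real (B$1$1) * z + of_real (B$1$2)"
  define D where "D = jfac B z"
  have D: "D \<noteq> 0" using assms D_def by simp
  have m: "mobius B z = N / D" by (simp add: mobius_def N_def D_def jfac_def)
  have j2: "jfac A (N/D) = (of_real (A$2$1) * N + of_real (A$2$2) * D) / D"
    using D by (simp add: jfac_def field_simps)
  have nz: "of_real (A$2$1) * N + of_real (A$2$2) * D \<noteq> 0" using assms(2) j2 m D by auto
  have "mobius A (N/D) = (of_real (A$1$1) * N + of_real (A$1$2) * D) / (of_real (A$2$1) * N + of_real (A$2$2) * D)"
  proof -
    have e1: "of_real (A$1$1) * (N/D) + of_real (A$1$2) = (of_real (A$1$1) * N + of_real (A$1$2) * D) / D"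
      using D by (simp add: field_simps)
    have e2: "of_real (A$2$1) * (N/D) + of_real (A$2$2) = (of_real (A$2$1) * N + of_real (A$2$2) * D) / D"
      using D by (simp add: field_simps)
    show ?thesis unfolding mobius_def e1 e2 using D by simp
  qed
  moreover have "mobius (A ** B) z = (of_real (A$1$1) * N + of_real (A$1$2) * D) / (of_real (A$2$1) * N + of_real (A$2$2) * D)"
    unfolding mobius_def N_def D_def jfac_def by (simp add: mult2_entries algebra_simps)
  ultimately show ?thesis using m by simp
qed

lemma jfac_mat1 [simp]: "jfac (mat 1) z = 1"
  by (simp add: jfac_def)

lemma mobius_mat1 [simp]: "mobius (mat 1) z = z"
  by (simp add: mobius_def)

lemma theta_mat1 [simp]: "theta (mat 1) z = 0"
  by (simp add: theta_def arg_conv_def)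

lemma theta_mult:
  fixes A B :: mat2
  assumes "det B = 1" "det A = 1" "Im z > 0"
  shows "cis (theta A (mobius B z)) * cis (theta B z) = cis (theta (A ** B) z)"
proof -
  have n1: "jfac B z \<noteq> 0" using jfac_nonzero assms by blast
  have n2: "jfac A (mobius B z) \<noteq> 0" using jfac_nonzero assms Im_mobius_pos by blast
  have e: "jfac (A ** B) z = jfac A (mobius B z) * jfac B z" using jfac_mult n1 by blast
  show ?thesis unfolding theta_def using n1 n2 e
    by (simp add: cis_arg_conv sgn_mult)
qed

lemma sigma_formula:
  fixes A B :: mat2
  assumes "det A = 1" "det B = 1"
  shows "sigma r A B = cis (r * (theta A (mobius B \<i>) + theta B \<i> - theta (A ** B) \<i>))"
proof -
  have n1: "jfac B \<i> \<noteq> 0" using jfac_nonzero assms by simp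
  have n2: "jfac A (mobius B \<i>) \<noteq> 0" using jfac_nonzero assms Im_mobius_pos[of B \<i>] by simp
  have e: "jfac (A ** B) \<i> = jfac A (mobius B \<i>) * jfac B \<i>" using jfac_mult n1 by blast
  define a where "a = jfac A (mobius B \<i>)"
  define b where "b = jfac B \<i>"
  have pa: "cmod a powr r > 0" "cmod b powr r > 0" using n1 n2 by (simp_all add: a_def b_def)
  have "sigma r A B = (of_real (cmod a powr r) * cis (r * arg_conv a)) * (of_real (cmod b powr r) * cis (r * arg_conv b))
      / (of_real (cmod a powr r * cmod b powr r) * cis (r * arg_conv (a*b)))"
    unfolding sigma_def cpow_conv_def e a_def b_def by (simp add: norm_mult powr_mult)
  also have "\<dots> = cis (r * arg_conv a) * cis (r * arg_conv b) / cis (r * arg_conv (a*b))"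
    using pa by (simp add: field_simps)
  also have "\<dots> = cis (r * (arg_conv a + arg_conv b - arg_conv (a*b)))"
    by (simp add: cis_mult cis_divide algebra_simps)
  finally show ?thesis unfolding theta_def a_def b_def e .
qed

lemma wind_lemma:
  fixes a b c :: real
  assumes "-pi \<le> a" "a < pi" "-pi \<le> b" "b < pi" "-pi \<le> c" "c < pi"
    and "cis a * cis b = cis c"
  shows "a + b - c = 2 * pi * (of_bool (a > 0 \<and> b > 0 \<and> c < 0) - of_bool (a < 0 \<and> b < 0 \<and> c \<ge> 0))"
proof -
  have "cis (a + b - c) = 1" using assms(7) by (simp add: cis_mult cis_divide[symmetric])
  then have "exp (\<i> * complex_of_real (a + b - c)) = 1" by (simp add: cis_conv_exp)
  then obtain n :: int where n: "a + b - c = of_int (2 * n) * pi"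
    by (auto simp: exp_eq_1)
  have n': "a + b - c = pi * (2 * of_int n)" using n by simp
  have "pi * (2 * of_int n) < pi * 3" "pi * (-3) < pi * (2 * of_int n)" using n' assms(1-6) by linarith+
  then have "2 * real_of_int n < 3" "-3 < 2 * real_of_int n"
    using pi_gt_zero mult_less_cancel_left_pos by blast+
  then have "n = -1 \<or> n = 0 \<or> n = 1" by linarith
  then show ?thesis using n assms(1-6) by auto
qed



lemma theta_sign:
  fixes A :: mat2
  assumes "det A = 1" "Im z > 0"
  shows "theta A z > 0 \<longleftrightarrow> A$2$1 > 0"
    and "theta A z < 0 \<longleftrightarrow> (A$2$1 < 0 \<or> (A$2$1 = 0 \<and> A$2$2 < 0))"
proof -
  have "A$2$1 = 0 \<Longrightarrow> A$2$2 \<noteq> 0" using assms(1) by (auto simp: det_2)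
  then have "A$2$1 > 0 \<or> A$2$1 < 0 \<or> (A$2$1 = 0 \<and> A$2$2 > 0) \<or> (A$2$1 = 0 \<and> A$2$2 < 0)"
    by linarith
  then show "theta A z > 0 \<longleftrightarrow> A$2$1 > 0"
    and "theta A z < 0 \<longleftrightarrow> (A$2$1 < 0 \<or> (A$2$1 = 0 \<and> A$2$2 < 0))"
    using theta_pos[of A z] theta_neg[of A z] theta_zero[of A z] theta_mpi[of A z] assms(2)
      pi_gt_zero by auto
qed

lemma hyp_d_pos:
  fixes A :: mat2
  assumes "det A = 1" "trace2 A > 2" "A$2$1 = 0"
  shows "A$2$2 > 0"
proof (rule ccontr)
  assume "\<not> A$2$2 > 0"
  moreover have "A$1$1 * A$2$2 = 1" using assms by (simp add: det_2)
  ultimately have "A$1$1 < 0" "A$2$2 < 0"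
    by (metis zero_less_mult_iff zero_less_one)+
  then show False using assms(2) by (simp add: trace2_def)
qed

lemma theta_sign_hyp:
  fixes A :: mat2
  assumes "det A = 1" "trace2 A > 2" "Im z > 0"
  shows "theta A z > 0 \<longleftrightarrow> A$2$1 > 0" "theta A z < 0 \<longleftrightarrow> A$2$1 < 0"
  using theta_sign[OF assms(1,3)] hyp_d_pos[OF assms(1,2)] by auto

lemma det_mat2_mult: "det ((A::mat2) ** B) = det A * det B"
  by (simp add: det_mul)

lemma core:
  fixes g P :: mat2
  assumes dg: "det g = 1" and dP: "det P = 1" and tr: "trace2 P > 2" and u: "Im u > 0"
  shows "theta g (mobius P u) + theta P u = theta (g ** P ** adj2 g) (mobius g u) + theta g u"
proof -
  define Q where "Q = g ** P ** adj2 g"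
  define M where "M = g ** P"
  have dQ: "det Q = 1" unfolding Q_def using dg dP by (simp add: det_mat2_mult det_adj2)
  have dM: "det M = 1" unfolding M_def using dg dP by (simp add: det_mat2_mult)
  have trQ: "trace2 Q > 2" unfolding Q_def using trace2_conj[OF dg] tr by simp
  have uP: "Im (mobius P u) > 0" using Im_mobius_pos dP u by blast
  have ug: "Im (mobius g u) > 0" using Im_mobius_pos dg u by blast
  have Qg: "Q ** g = M" unfolding Q_def M_def
    by (simp add: matrix_mul_assoc[symmetric] adj2_left[OF dg])
  have c1: "cis (theta g (mobius P u)) * cis (theta P u) = cis (theta M u)"
    unfolding M_def using theta_mult[OF dP dg u] .
  have c2: "cis (theta Q (mobius g u)) * cis (theta g u) = cis (theta M u)"
    using theta_mult[OF dg dQ u] Qg by simp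
  note E1 = wind_lemma[OF theta_bounds theta_bounds theta_bounds c1]
  note E2 = wind_lemma[OF theta_bounds theta_bounds theta_bounds c2]
  define c where "c = g$2$1"
  define d where "d = g$2$2"
  define p where "p = P$1$1"
  define q where "q = P$1$2"
  define r where "r = P$2$1"
  define t where "t = P$2$2"
  have pt: "p * t - q * r = 1" using dP by (simp add: det_2 p_def q_def r_def t_def)
  have trpt: "p + t > 2" using tr by (simp add: trace2_def p_def t_def)
  have M21: "M$2$1 = c * p + d * r" by (simp add: M_def mult2_entries c_def d_def p_def r_def)
  have Q21: "Q$2$1 = r*d*d + (p - t)*c*d - q*c*c"
    by (simp add: Q_def mult2_entries c_def d_def p_def q_def r_def t_def algebra_simps)
  have ident: "r * Q$2$1 = M$2$1 * (M$2$1 - (p + t) * c) + c * c"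
    unfolding Q21 M21 using pt by (simp add: algebra_simps)
  have sg1: "theta g (mobius P u) > 0 \<longleftrightarrow> c > 0" "theta g u > 0 \<longleftrightarrow> c > 0"
    using theta_sign(1)[OF dg uP] theta_sign(1)[OF dg u] c_def by auto
  have sg2: "theta g (mobius P u) < 0 \<longleftrightarrow> (c < 0 \<or> (c = 0 \<and> d < 0))"
       "theta g u < 0 \<longleftrightarrow> (c < 0 \<or> (c = 0 \<and> d < 0))"
    using theta_sign(2)[OF dg uP] theta_sign(2)[OF dg u] c_def d_def by auto
  have sP: "theta P u > 0 \<longleftrightarrow> r > 0" "theta P u < 0 \<longleftrightarrow> r < 0"
    using theta_sign_hyp[OF dP tr u] r_def by auto
  have sQ: "theta Q (mobius g u) > 0 \<longleftrightarrow> Q$2$1 > 0" "theta Q (mobius g u) < 0 \<longleftrightarrow> Q$2$1 < 0"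
    using theta_sign_hyp[OF dQ trQ ug] by auto
  have sM1: "theta M u < 0 \<Longrightarrow> M$2$1 \<le> 0" using theta_sign(2)[OF dM u] by auto
  have sM2: "\<not> theta M u < 0 \<Longrightarrow> M$2$1 \<ge> 0" using theta_sign(2)[OF dM u] by auto
  have K1: "r * Q$2$1 > 0" if "c > 0" "M$2$1 \<le> 0"
  proof -
    have "(p + t) * c > 0" using that trpt by simp
    then have "M$2$1 - (p + t) * c < 0" using that by linarith
    then have "M$2$1 * (M$2$1 - (p + t) * c) \<ge> 0" using that(2) by (simp add: mult_nonpos_nonpos)
    then show ?thesis using ident that(1) by (simp add: add_nonneg_pos)
  qed
  have K2: "r * Q$2$1 > 0" if "c < 0" "M$2$1 \<ge> 0"
  proof -
    have "(p + t) * c < 0" using that trpt by (simp add: mult_pos_neg)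
    then have "M$2$1 - (p + t) * c > 0" using that by linarith
    then have "M$2$1 * (M$2$1 - (p + t) * c) \<ge> 0" using that(2) by simp
    moreover have "c * c > 0" using that(1) by (simp add: mult_neg_neg)
    ultimately show ?thesis using ident by linarith
  qed
  have K3: "Q$2$1 = r * d * d" if "c = 0" using Q21 that by simp
  have sgn_eq: "(r > 0 \<longleftrightarrow> Q$2$1 > 0) \<and> (r < 0 \<longleftrightarrow> Q$2$1 < 0)" if "r * Q$2$1 > 0"
    using that by (auto simp: zero_less_mult_iff)
  have b1: "(theta g (mobius P u) > 0 \<and> theta P u > 0 \<and> theta M u < 0) \<longleftrightarrow>
            (theta Q (mobius g u) > 0 \<and> theta g u > 0 \<and> theta M u < 0)"
    using sg1 sP sQ sM1 K1 sgn_eq by blast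
  have d0: "d \<noteq> 0" if "c = 0" using dg that by (auto simp: det_2 c_def d_def)
  have b2: "(theta g (mobius P u) < 0 \<and> theta P u < 0 \<and> theta M u \<ge> 0) \<longleftrightarrow>
            (theta Q (mobius g u) < 0 \<and> theta g u < 0 \<and> theta M u \<ge> 0)"
  proof -
    have "(r < 0 \<longleftrightarrow> Q$2$1 < 0)" if "c < 0 \<or> (c = 0 \<and> d < 0)" "theta M u \<ge> 0"
    proof (cases "c < 0")
      case True
      then show ?thesis using K2 sM2 that sgn_eq by (meson not_less)
    next
      case False
      then have "c = 0" "d < 0" using that by auto
      then have "Q$2$1 = r * (d * d)" using K3 by simp
      moreover have "d * d > 0" using \<open>d < 0\<close> by (simp add: mult_neg_neg)
      ultimately show ?thesis by (auto simp: mult_less_0_iff)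
    qed
    then show ?thesis using sg2 sP sQ by blast
  qed
  have "theta g (mobius P u) + theta P u - theta M u = theta Q (mobius g u) + theta g u - theta M u"
    using E1 E2 b1 b2 by simp
  then show ?thesis unfolding Q_def by simp
qed



lemma cscale_mult_left: "cscale_mat c A ** B = cscale_mat c (A ** B)"
  by (simp add: vec_eq_iff cscale_mat_def matrix_matrix_mult_def sum_distrib_left mult.assoc)

lemma cscale_mult_right: "A ** cscale_mat c B = cscale_mat c (A ** B)"
  by (simp add: vec_eq_iff cscale_mat_def matrix_matrix_mult_def sum_distrib_left mult.left_commute)

lemma cscale_cscale: "cscale_mat c (cscale_mat d A) = cscale_mat (c * d) A"
  by (simp add: vec_eq_iff cscale_mat_def mult.assoc)

lemma cscale_one [simp]: "cscale_mat 1 A = A"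
  by (simp add: vec_eq_iff cscale_mat_def)

lemma matrix_diff_ldistrib: "(A::'a::comm_ring_1^'n^'m) ** (B - C) = A ** B - A ** C"
  by (simp add: vec_eq_iff matrix_matrix_mult_def sum_subtractf algebra_simps)

lemma matrix_diff_rdistrib: "((B::'a::comm_ring_1^'n^'m) - C) ** A = B ** A - C ** A"
  by (simp add: vec_eq_iff matrix_matrix_mult_def sum_subtractf algebra_simps)

lemma det_conj_unitary:
  fixes U V :: "complex^'m::finite^'m"
  assumes "unitary_mat U"
  shows "det (mat 1 - cscale_mat x (U ** V ** adjoint_mat U)) = det (mat 1 - cscale_mat x V)"
proof -
  have u1: "U ** adjoint_mat U = mat 1" and u2: "adjoint_mat U ** U = mat 1"
    using assms by (auto simp: unitary_mat_def)
  have "U ** (mat 1 - cscale_mat x V) ** adjoint_mat U = mat 1 - cscale_mat x (U ** V ** adjoint_mat U)"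
    by (simp add: matrix_diff_ldistrib matrix_diff_rdistrib u1 cscale_mult_left cscale_mult_right)
  then have "det (mat 1 - cscale_mat x (U ** V ** adjoint_mat U)) = det U * det (mat 1 - cscale_mat x V) * det (adjoint_mat U)"
    by (metis det_mul)
  also have "\<dots> = det (mat 1 - cscale_mat x V) * det (U ** adjoint_mat U)"
    by (simp add: det_mul)
  finally show ?thesis by (simp add: u1)
qed

lemma det_adjoint_conj:
  fixes U :: "complex^'m::finite^'m"
  shows "det (mat 1 - cscale_mat x (adjoint_mat U)) = det (mat 1 - cscale_mat x (conj_mat U))"
proof -
  have "transpose (mat 1 - cscale_mat x (conj_mat U)) = mat 1 - cscale_mat x (adjoint_mat U)"
    by (simp add: vec_eq_iff transpose_def mat_def adjoint_mat_def conj_mat_def cscale_mat_def)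
  then show ?thesis by (metis det_transpose)
qed

lemma fuchsian_det: "fuchsian_group G \<Longrightarrow> g \<in> G \<Longrightarrow> det g = 1"
  by (auto simp: fuchsian_group_def SL2R_def)

lemma fuchsian_adj2: "fuchsian_group G \<Longrightarrow> g \<in> G \<Longrightarrow> adj2 g \<in> G"
  using matrix_inv_adj2[of g] fuchsian_det[of G g] by (auto simp: fuchsian_group_def)

lemma fuchsian_mult: "fuchsian_group G \<Longrightarrow> g \<in> G \<Longrightarrow> h \<in> G \<Longrightarrow> g ** h \<in> G"
  by (auto simp: fuchsian_group_def)

lemma fuchsian_one: "fuchsian_group G \<Longrightarrow> mat 1 \<in> G"
  by (auto simp: fuchsian_group_def)

lemma det_mat1: "det (mat 1 :: mat2) = 1"
  by simp

lemma sigma_one: "sigma r (mat 1) (mat 1) = 1"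
  using sigma_formula[OF det_mat1 det_mat1, of r] by simp

context
  fixes G :: "mat2 set" and r :: real and X :: "mat2 \<Rightarrow> complex^'m::finite^'m"
  assumes FG: "fuchsian_group G" and MS: "multiplier_system G r X"
begin

lemma ms_unitary: "g \<in> G \<Longrightarrow> unitary_mat (X g)"
  using MS by (auto simp: multiplier_system_def)

lemma ms_mult: "g \<in> G \<Longrightarrow> h \<in> G \<Longrightarrow> X (g ** h) = cscale_mat (sigma r g h) (X g ** X h)"
  using MS by (auto simp: multiplier_system_def)

lemma ms_id: "X (mat 1) = mat 1"
proof -
  have I: "mat 1 \<in> G" using fuchsian_one[OF FG] .
  have "X (mat 1) = X (mat 1) ** X (mat 1)"
    using ms_mult[OF I I] sigma_one[of r] by simp
  then have "adjoint_mat (X (mat 1)) ** X (mat 1) = (adjoint_mat (X (mat 1)) ** X (mat 1)) ** X (mat 1)"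
    by (metis matrix_mul_assoc)
  then show ?thesis using ms_unitary[OF I] by (simp add: unitary_mat_def)
qed

lemma sigma_nz: "det A = 1 \<Longrightarrow> det B = 1 \<Longrightarrow> sigma r A B \<noteq> 0"
  by (simp add: sigma_formula)

lemma ms_inv:
  assumes g: "g \<in> G"
  shows "X (adj2 g) = cscale_mat (inverse (sigma r g (adj2 g))) (adjoint_mat (X g))"
proof -
  have g': "adj2 g \<in> G" using fuchsian_adj2[OF FG g] .
  have dg: "det g = 1" using fuchsian_det[OF FG g] .
  have nz: "sigma r g (adj2 g) \<noteq> 0" using sigma_nz dg det_adj2[of g] by simp
  have "mat 1 = cscale_mat (sigma r g (adj2 g)) (X g ** X (adj2 g))"
    using ms_mult[OF g g'] ms_id adj2_right[OF dg] by simp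
  then have "adjoint_mat (X g) = adjoint_mat (X g) ** cscale_mat (sigma r g (adj2 g)) (X g ** X (adj2 g))"
    by (metis matrix_mul_rid)
  also have "\<dots> = cscale_mat (sigma r g (adj2 g)) (X (adj2 g))"
    using ms_unitary[OF g] by (simp add: cscale_mult_right matrix_mul_assoc unitary_mat_def)
  finally have "cscale_mat (inverse (sigma r g (adj2 g))) (adjoint_mat (X g)) = X (adj2 g)"
    using nz by (simp add: cscale_cscale)
  then show ?thesis by simp
qed

lemma ms_conj:
  assumes g: "g \<in> G" and P: "P \<in> G" and tr: "trace2 P > 2"
  shows "X (g ** P ** adj2 g) = X g ** X P ** adjoint_mat (X g)"
proof -
  define g' where "g' = adj2 g"
  have g': "g' \<in> G" using fuchsian_adj2[OF FG g] g'_def by simp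
  have dg: "det g = 1" using fuchsian_det[OF FG g] .
  have dg': "det g' = 1" using dg det_adj2 g'_def by simp
  have dP: "det P = 1" using fuchsian_det[OF FG P] .
  have Pg': "P ** g' \<in> G" using fuchsian_mult[OF FG P g'] .
  have dPg': "det (P ** g') = 1" using dP dg' by (simp add: det_mat2_mult)
  define u where "u = mobius g' \<i>"
  have u: "Im u > 0" using Im_mobius_pos[OF dg'] u_def by simp
  have n1: "jfac g' \<i> \<noteq> 0" using jfac_nonzero[OF dg'] by simp
  have n2: "jfac P u \<noteq> 0" using jfac_nonzero[OF dP u] .
  have n3: "jfac g u \<noteq> 0" using jfac_nonzero[OF dg u] .
  have mobPg: "mobius (P ** g') \<i> = mobius P u" using mobius_mult[OF n1] n2 u_def by simp
  have gg': "g ** g' = mat 1" using adj2_right[OF dg] g'_def by simp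
  have "mobius (g ** g') \<i> = mobius g u" using mobius_mult[OF n1, of g] n3 u_def by simp
  then have mobgg: "mobius g u = \<i>" using gg' by simp
  have Q: "g ** P ** adj2 g = g ** (P ** g')" by (simp add: g'_def matrix_mul_assoc)
  have cr: "theta g (mobius P u) + theta P u = theta (g ** (P ** g')) \<i> + theta g u"
    using core[OF dg dP tr u] mobgg Q by simp
  have s1: "sigma r g (P ** g') = cis (r * (theta g (mobius P u) + theta (P ** g') \<i> - theta (g ** (P ** g')) \<i>))"
    using sigma_formula[OF dg dPg'] mobPg by simp
  have s2: "sigma r P g' = cis (r * (theta P u + theta g' \<i> - theta (P ** g') \<i>))"
    using sigma_formula[OF dP dg'] u_def by simp
  have s3: "sigma r g g' = cis (r * (theta g u + theta g' \<i>))"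
    using sigma_formula[OF dg dg'] u_def gg' by simp
  have ss: "sigma r g (P ** g') * sigma r P g' = sigma r g g'"
  proof -
    define A where "A = theta g (mobius P u) + theta (P ** g') \<i> - theta (g ** (P ** g')) \<i>"
    define B where "B = theta P u + theta g' \<i> - theta (P ** g') \<i>"
    have e: "A + B = theta g u + theta g' \<i>" using cr unfolding A_def B_def by linarith
    have "sigma r g (P ** g') * sigma r P g' = cis (r * A + r * B)"
      unfolding s1 s2 A_def B_def by (simp add: cis_mult)
    also have "r * A + r * B = r * (theta g u + theta g' \<i>)" using e by (metis distrib_left)
    finally show ?thesis by (simp add: s3)
  qed
  have "X (g ** P ** adj2 g) = cscale_mat (sigma r g (P ** g')) (X g ** X (P ** g'))"
    using ms_mult[OF g Pg'] Q by simp
  also have "\<dots> = cscale_mat (sigma r g (P ** g') * sigma r P g') (X g ** (X P ** X g'))"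
    using ms_mult[OF P g'] by (simp add: cscale_mult_right cscale_cscale)
  also have "\<dots> = cscale_mat (sigma r g g') (X g ** (X P ** cscale_mat (inverse (sigma r g g')) (adjoint_mat (X g))))"
    using ms_inv[OF g] ss g'_def by simp
  also have "\<dots> = X g ** X P ** adjoint_mat (X g)"
    using sigma_nz[OF dg dg'] by (simp add: cscale_mult_right cscale_cscale matrix_mul_assoc)
  finally show ?thesis .
qed

lemma ms_inv_hyp:
  assumes P: "P \<in> G" and tr: "trace2 P > 2"
  shows "X (adj2 P) = adjoint_mat (X P)"
proof -
  have dP: "det P = 1" using fuchsian_det[OF FG P] .
  have dP': "det (adj2 P) = 1" using dP det_adj2 by simp
  have trP': "trace2 (adj2 P) > 2" using tr trace2_adj2 by simp
  define u where "u = mobius (adj2 P) \<i>"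
  have u: "Im u > 0" using Im_mobius_pos[OF dP'] u_def by simp
  have c: "cis (theta P u) * cis (theta (adj2 P) \<i>) = cis (theta (mat 1) \<i>)"
    using theta_mult[OF dP' dP] adj2_right[OF dP] u_def by simp
  have w: "theta P u + theta (adj2 P) \<i> - theta (mat 1) \<i> = 2 * pi * (of_bool (theta P u > 0 \<and> theta (adj2 P) \<i> > 0 \<and> theta (mat 1) \<i> < 0) - of_bool (theta P u < 0 \<and> theta (adj2 P) \<i> < 0 \<and> theta (mat 1) \<i> \<ge> 0))"
    using wind_lemma[OF theta_bounds theta_bounds theta_bounds c] .
  have "\<not> (theta P u < 0 \<and> theta (adj2 P) \<i> < 0)"
    using theta_sign_hyp(2)[OF dP tr u] theta_sign_hyp(2)[OF dP' trP', of \<i>] by simp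
  then have "theta P u + theta (adj2 P) \<i> = 0" using w by simp
  then have "sigma r P (adj2 P) = 1" using sigma_formula[OF dP dP'] u_def adj2_right[OF dP] by simp
  then show ?thesis using ms_inv[OF P] by simp
qed

end



definition Fac :: "(mat2 \<Rightarrow> complex^'m^'m) \<Rightarrow> complex \<Rightarrow> mat2 \<Rightarrow> complex" where
  "Fac X s P = det (mat 1 - cscale_mat ((of_real (hnorm P)) powr (- s)) (X P))"

lemma ruelle_factor_Fac: "ruelle_factor X s C = Fac X s (SOME Q. Q \<in> C)"
  by (simp add: ruelle_factor_def Fac_def Let_def)

lemma hnorm_conj: "det g = 1 \<Longrightarrow> hnorm (g ** P ** adj2 g) = hnorm P"
  by (simp add: hnorm_def trace2_conj)

lemma hnorm_adj2: "hnorm (adj2 P) = hnorm P"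
  by (simp add: hnorm_def trace2_adj2)

lemma conj_class_adj2:
  assumes "fuchsian_group G"
  shows "conj_class G P = {g ** P ** adj2 g | g. g \<in> G}"
  unfolding conj_class_def using matrix_inv_adj2 fuchsian_det[OF assms] by metis

lemma prim_inv:
  assumes FG: "fuchsian_group G" and P: "prim_hyp G P"
  shows "prim_hyp G (adj2 P)"
proof -
  have PG: "P \<in> G" and tr: "trace2 P > 2"
    and np: "\<not> (\<exists>Q\<in>G. \<exists>n::nat. n \<ge> 2 \<and> (P = mpow Q n \<or> P = - mpow Q n))"
    using P by (auto simp: prim_hyp_def)
  have "\<not> (\<exists>Q\<in>G. \<exists>n::nat. n \<ge> 2 \<and> (adj2 P = mpow Q n \<or> adj2 P = - mpow Q n))"
  proof
    assume "\<exists>Q\<in>G. \<exists>n::nat. n \<ge> 2 \<and> (adj2 P = mpow Q n \<or> adj2 P = - mpow Q n)"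
    then obtain Q n where Q: "Q \<in> G" "n \<ge> 2" "adj2 P = mpow Q n \<or> adj2 P = - mpow Q n" by blast
    then have "P = mpow (adj2 Q) n \<or> P = - mpow (adj2 Q) n"
      by (metis adj2_adj2 adj2_mpow adj2_uminus)
    moreover have "adj2 Q \<in> G" using fuchsian_adj2[OF FG Q(1)] .
    ultimately show False using np Q(2) by blast
  qed
  then show ?thesis using fuchsian_adj2[OF FG PG] tr trace2_adj2[of P]
    by (auto simp: prim_hyp_def)
qed

lemma adj2_conj_class:
  assumes FG: "fuchsian_group G"
  shows "adj2 ` conj_class G P = conj_class G (adj2 P)"
proof -
  have e: "adj2 (g ** P ** adj2 g) = g ** adj2 P ** adj2 g" for g
    by (simp add: adj2_mult matrix_mul_assoc)
  have s1: "{g ** P ** adj2 g |g. g \<in> G} = (\<lambda>g. g ** P ** adj2 g) ` G" by blast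
  have s2: "{g ** adj2 P ** adj2 g |g. g \<in> G} = (\<lambda>g. g ** adj2 P ** adj2 g) ` G" by blast
  show ?thesis unfolding conj_class_adj2[OF FG] s1 s2 image_image e ..
qed

context
  fixes G :: "mat2 set" and r :: real and X :: "mat2 \<Rightarrow> complex^'m::finite^'m"
  assumes FG: "fuchsian_group G" and MS: "multiplier_system G r X"
begin

lemma fac_conj:
  assumes g: "g \<in> G" and P: "P \<in> G" and tr: "trace2 P > 2"
  shows "Fac X s (g ** P ** adj2 g) = Fac X s P"
  unfolding Fac_def hnorm_conj[OF fuchsian_det[OF FG g]] ms_conj[OF FG MS g P tr]
  by (rule det_conj_unitary[OF ms_unitary[OF FG MS g]])

lemma class_factor:
  assumes P: "prim_hyp G P"
  shows "ruelle_factor X s (conj_class G P) = Fac X s P"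
proof -
  have PG: "P \<in> G" and tr: "trace2 P > 2" using P by (auto simp: prim_hyp_def)
  have I: "mat 1 \<in> G" using fuchsian_one[OF FG] .
  have "P \<in> conj_class G P" unfolding conj_class_adj2[OF FG] using I by force
  then have "(SOME Q. Q \<in> conj_class G P) \<in> conj_class G P" by (rule someI)
  then obtain g where g: "g \<in> G" "(SOME Q. Q \<in> conj_class G P) = g ** P ** adj2 g"
    unfolding conj_class_adj2[OF FG] by blast
  show ?thesis unfolding ruelle_factor_Fac g(2) fac_conj[OF g(1) PG tr] ..
qed

end

lemma mero_eq:
  fixes f g :: "complex \<Rightarrow> complex"
  assumes "f meromorphic_on UNIV" "g meromorphic_on UNIV"
    and eq: "\<And>s. Re s > 1 \<Longrightarrow> f s = g s"
  shows "\<forall>z. \<forall>\<^sub>F s in at z. f s = g s"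
proof -
  define h where "h = (\<lambda>s. f s - g s)"
  have hm: "h meromorphic_on UNIV" unfolding h_def using assms(1,2) by (intro meromorphic_intros)
  have iso: "isolated_singularity_at h z" for z
    using meromorphic_on_isolated_singularity meromorphic_on_subset[OF hm] by blast
  have "eventually (\<lambda>w. w \<in> {w. Re w > 1}) (at (2::complex))"
    by (intro eventually_at_in_open') (auto simp: open_halfspace_Re_gt)
  then have "eventually (\<lambda>w. h w = 0) (at (2::complex))"
    by eventually_elim (simp add: h_def eq)
  then have "eventually (\<lambda>w. remove_sings h w = 0) (at (2::complex))"
    using eventually_remove_sings_eq_at[OF iso[of 2]] by eventually_elim simp
  then have "frequently (\<lambda>w. remove_sings h w = 0) (at (2::complex))"
    by (simp add: eventually_frequently)
  note fr = this
  have rz: "remove_sings h w = 0" for w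
    by (rule frequently_eq_meromorphic_imp_constant[OF fr remove_sings_nicely_meromorphic[OF hm]]) auto
  show ?thesis
  proof
    fix z
    show "\<forall>\<^sub>F s in at z. f s = g s"
      using eventually_remove_sings_eq_at[OF iso[of z]] by eventually_elim (metis rz h_def eq_iff_diff_eq_0)
  qed
qed



theorem corollary3p7:
  fixes G :: "mat2 set" and k :: real
    and chi_k chi_mk :: "mat2 \<Rightarrow> complex^'m::finite^'m"
    and R_k R_mk :: "complex \<Rightarrow> complex"
  assumes "fuchsian_group G" and "cocompact G" and "- mat 1 \<in> G"
    and "multiplier_system G (2 * k) chi_k"
    and "multiplier_system G (- 2 * k) chi_mk"
    and "\<forall>g\<in>G. chi_mk g = conj_mat (chi_k g)"
    and "ruelle_zeta G chi_k R_k"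
    and "ruelle_zeta G chi_mk R_mk"
  shows "\<forall>z. \<forall>\<^sub>F s in at z. R_mk s * R_mk (- s) = R_k s * R_k (- s)"
proof -
  note FG = assms(1) and MSk = assms(4) and MSmk = assms(5) and cj = assms(6)
    and Rk = assms(7) and Rmk = assms(8)
  define S where "S = prim_hyp_classes G"
  define io where "io = (\<lambda>C::mat2 set. adj2 ` C)"
  have ioio: "io (io C) = C" for C unfolding io_def by (simp add: image_image)
  have ioS: "io C \<in> S" if hC: "C \<in> S" for C
  proof -
    obtain P where P: "prim_hyp G P" "C = conj_class G P" using hC unfolding S_def prim_hyp_classes_def by blast
    then have "io C = conj_class G (adj2 P)" using adj2_conj_class[OF FG] io_def by simp
    then show ?thesis using prim_inv[OF FG P(1)] by (auto simp: S_def prim_hyp_classes_def)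
  qed
  have inj: "inj_on io S" by (metis inj_onI ioio)
  have imS: "io ` S = S"
  proof
    show "io ` S \<subseteq> S" using ioS by blast
    show "S \<subseteq> io ` S" using ioS ioio by (metis image_eqI subsetI)
  qed
  have facrel: "ruelle_factor chi_mk s C = ruelle_factor chi_k s (io C)" if hC: "C \<in> S" for C s
  proof -
    obtain P where P: "prim_hyp G P" "C = conj_class G P" using hC unfolding S_def prim_hyp_classes_def by blast
    have PG: "P \<in> G" and tr: "trace2 P > 2" using P(1) by (auto simp: prim_hyp_def)
    have "ruelle_factor chi_mk s C = Fac chi_mk s P" using class_factor[OF FG MSmk P(1)] P(2) by simp
    also have "\<dots> = det (mat 1 - cscale_mat ((of_real (hnorm P)) powr (- s)) (conj_mat (chi_k P)))"
      using cj PG by (simp add: Fac_def)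
    also have "\<dots> = det (mat 1 - cscale_mat ((of_real (hnorm (adj2 P))) powr (- s)) (adjoint_mat (chi_k P)))"
      by (simp add: det_adjoint_conj hnorm_adj2)
    also have "\<dots> = Fac chi_k s (adj2 P)"
      using ms_inv_hyp[OF FG MSk PG tr] by (simp add: Fac_def)
    also have "\<dots> = ruelle_factor chi_k s (conj_class G (adj2 P))"
      using class_factor[OF FG MSk prim_inv[OF FG P(1)]] by simp
    also have "conj_class G (adj2 P) = io C" using adj2_conj_class[OF FG] io_def P(2) by simp
    finally show ?thesis .
  qed
  have Req: "R_mk s = R_k s" if s: "Re s > 1" for s
  proof -
    have t1: "((\<lambda>F. \<Prod>C\<in>F. ruelle_factor chi_k s C) \<longlongrightarrow> R_k s) (finite_subsets_at_top S)"
      using Rk s by (simp add: ruelle_zeta_def S_def)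
    then have "((\<lambda>F. \<Prod>C\<in>F. ruelle_factor chi_k s C) \<longlongrightarrow> R_k s) (filtermap ((`) io) (finite_subsets_at_top S))"
      using filtermap_image_finite_subsets_at_top[OF inj] imS by simp
    then have t2: "((\<lambda>F. \<Prod>C\<in>io ` F. ruelle_factor chi_k s C) \<longlongrightarrow> R_k s) (finite_subsets_at_top S)"
      by (simp add: filterlim_filtermap)
    have ev: "eventually (\<lambda>F. (\<Prod>C\<in>io ` F. ruelle_factor chi_k s C) = (\<Prod>C\<in>F. ruelle_factor chi_mk s C)) (finite_subsets_at_top S)"
    proof (rule eventually_finite_subsets_at_top_weakI)
      fix F assume F: "finite F" "F \<subseteq> S"
      have "inj_on io F" using inj F(2) inj_on_subset by blast
      then have "(\<Prod>C\<in>io ` F. ruelle_factor chi_k s C) = (\<Prod>C\<in>F. ruelle_factor chi_k s (io C))"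
        by (simp add: prod.reindex)
      also have "\<dots> = (\<Prod>C\<in>F. ruelle_factor chi_mk s C)"
        using facrel F(2) by (intro prod.cong) auto
      finally show "(\<Prod>C\<in>io ` F. ruelle_factor chi_k s C) = (\<Prod>C\<in>F. ruelle_factor chi_mk s C)" .
    qed
    have t3: "((\<lambda>F. \<Prod>C\<in>F. ruelle_factor chi_mk s C) \<longlongrightarrow> R_k s) (finite_subsets_at_top S)"
      using tendsto_cong[OF ev] t2 by simp
    have t4: "((\<lambda>F. \<Prod>C\<in>F. ruelle_factor chi_mk s C) \<longlongrightarrow> R_mk s) (finite_subsets_at_top S)"
      using Rmk s by (simp add: ruelle_zeta_def S_def)
    show ?thesis using tendsto_unique[OF finite_subsets_at_top_neq_bot t4 t3] .
  qed
  have mer: "R_mk meromorphic_on UNIV" "R_k meromorphic_on UNIV"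
    using Rk Rmk by (auto simp: ruelle_zeta_def)
  have ev: "\<forall>z. \<forall>\<^sub>F s in at z. R_mk s = R_k s" using mero_eq[OF mer Req] by blast
  show ?thesis
  proof
    fix z :: complex
    have e1: "\<forall>\<^sub>F s in at z. R_mk s = R_k s" using ev by blast
    have "\<forall>\<^sub>F s in at (- z). R_mk s = R_k s" using ev by blast
    then have "\<forall>\<^sub>F s in filtermap (\<lambda>x. - x) (at z). R_mk s = R_k s" by (simp add: filtermap_at_minus)
    then have e2: "\<forall>\<^sub>F s in at z. R_mk (- s) = R_k (- s)" by (simp add: eventually_filtermap)
    show "\<forall>\<^sub>F s in at z. R_mk s * R_mk (- s) = R_k s * R_k (- s)"
      using e1 e2 by eventually_elim simp
  qed
qed

end
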